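(* For every integer $m\geq 2$ and every integer $n\geq 2$, the graph $mL_n$ (the disjoint union of $m$ copies of the ladder $L_n$) is $C_4$-supermagic.
   Context: All graphs are finite and simple. For a graph $H$, a graph $G=(V,E)$ has an $H$-covering if every edge of $G$ belongs to a subgraph of $G$ isomorphic to $H$. For such $G$, an $H$-magic labeling is a bijection $\lambda: V\cup E\to\{1,2,\dots,|V|+|E|\}$ for which there is a constant $c$ such that for every subgraph $H'=(V',E')$ of $G$ isomorphic to $H$, $\sum_{v\in V'}\lambda(v)+\sum_{e\in E'}\lambda(e)=c$. It is $H$-supermagic if moreover $\{\lambda(v):v\in V\}=\{1,\dots,|V|\}$; $G$ is $H$-supermagic if it admits such a labeling. $C_k$ is the cycle of length $k$. $mG$ denotes the disjoint union of $m$ copies of $G$. The ladder $L_n=P_n\times P_2$ ($n\ge2$) has vertices $u_i,v_i$ ($1\le i\le n$) and edges $u_iv_i$ ($1\le i\le n$), $u_iu_{i+1}$ and $v_iv_{i+1}$ ($1\le i\le n-1$). *)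

theory Defs
  imports Main
begin

type_synonym 'a graph = "'a set \<times> 'a set set"

definition verts :: "'a graph \<Rightarrow> 'a set" where "verts G = fst G"
definition edges :: "'a graph \<Rightarrow> 'a set set" where "edges G = snd G"

definition simple_graph :: "'a graph \<Rightarrow> bool" where
  "simple_graph G \<longleftrightarrow> finite (verts G) \<and>
     (\<forall>e\<in>edges G. \<exists>x y. x \<in> verts G \<and> y \<in> verts G \<and> x \<noteq> y \<and> e = {x, y})"

definition graph_iso :: "'a graph \<Rightarrow> 'b graph \<Rightarrow> bool" where
  "graph_iso G H \<longleftrightarrow> (\<exists>f. bij_betw f (verts G) (verts H) \<and>
     (\<forall>x\<in>verts G. \<forall>y\<in>verts G. {x, y} \<in> edges G \<longleftrightarrow> {f x, f y} \<in> edges H))"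

definition is_subgraph :: "'a graph \<Rightarrow> 'a graph \<Rightarrow> bool" where
  "is_subgraph G' G \<longleftrightarrow> verts G' \<subseteq> verts G \<and> edges G' \<subseteq> edges G \<and>
     (\<forall>e\<in>edges G'. e \<subseteq> verts G')"

definition H_subgraphs :: "'b graph \<Rightarrow> 'a graph \<Rightarrow> 'a graph set" where
  "H_subgraphs H G = {G'. is_subgraph G' G \<and> graph_iso G' H}"

definition H_covering :: "'b graph \<Rightarrow> 'a graph \<Rightarrow> bool" where
  "H_covering H G \<longleftrightarrow> (\<forall>e\<in>edges G. \<exists>G'\<in>H_subgraphs H G. e \<in> edges G')"

text \<open>A total labeling assigns labels to vertices (Inl v) and edges (Inr e).\<close>
definition weight :: "('a + 'a set \<Rightarrow> nat) \<Rightarrow> 'a graph \<Rightarrow> nat" where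
  "weight lam G' = (\<Sum>v\<in>verts G'. lam (Inl v)) + (\<Sum>e\<in>edges G'. lam (Inr e))"

definition H_magic_labeling :: "'b graph \<Rightarrow> 'a graph \<Rightarrow> ('a + 'a set \<Rightarrow> nat) \<Rightarrow> bool" where
  "H_magic_labeling H G lam \<longleftrightarrow>
     bij_betw lam (Inl ` verts G \<union> Inr ` edges G) {1..card (verts G) + card (edges G)} \<and>
     (\<exists>c. \<forall>G'\<in>H_subgraphs H G. weight lam G' = c)"

definition H_supermagic_labeling :: "'b graph \<Rightarrow> 'a graph \<Rightarrow> ('a + 'a set \<Rightarrow> nat) \<Rightarrow> bool" where
  "H_supermagic_labeling H G lam \<longleftrightarrow> H_magic_labeling H G lam \<and>
     (\<lambda>v. lam (Inl v)) ` verts G = {1..card (verts G)}"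

definition H_supermagic :: "'b graph \<Rightarrow> 'a graph \<Rightarrow> bool" where
  "H_supermagic H G \<longleftrightarrow> simple_graph G \<and> H_covering H G \<and> (\<exists>lam. H_supermagic_labeling H G lam)"

definition cycle_graph :: "nat \<Rightarrow> nat graph" where
  "cycle_graph k = ({0..<k}, {{i, (i + 1) mod k} | i. i < k})"

text \<open>The ladder L_n: u_i = (i, False), v_i = (i, True), 1 \<le> i \<le> n.\<close>
definition ladder :: "nat \<Rightarrow> (nat \<times> bool) graph" where
  "ladder n = ({1..n} \<times> UNIV,
     {{(i, False), (i, True)} | i. 1 \<le> i \<and> i \<le> n} \<union>
     {{(i, b), (i + 1, b)} | i b. 1 \<le> i \<and> i < n})"

definition copies :: "nat \<Rightarrow> 'a graph \<Rightarrow> (nat \<times> 'a) graph" where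
  "copies m G = ({..<m} \<times> verts G,
     {(\<lambda>x. (j, x)) ` e | j e. j < m \<and> e \<in> edges G})"

end

theory Submission
  imports Defs
begin


definition rung :: "nat \<Rightarrow> nat \<Rightarrow> (nat \<times> nat \<times> bool) set" where
  "rung j i = {(j,i,False),(j,i,True)}"
definition hor :: "nat \<Rightarrow> nat \<Rightarrow> bool \<Rightarrow> (nat \<times> nat \<times> bool) set" where
  "hor j i b = {(j,i,b),(j,Suc i,b)}"

lemma verts_G: "verts (copies m (ladder n)) = {..<m} \<times> ({1..n} \<times> UNIV)"
  by (simp add: copies_def ladder_def verts_def)

lemma copies_edges: "edges (copies m G) = {(\<lambda>x. (j,x)) ` e | j e. j<m \<and> e \<in> edges G}"
  by (simp add: copies_def edges_def)

lemma ladder_edges: "edges (ladder n) = {{(i, False), (i, True)} | i. 1 \<le> i \<and> i \<le> n} \<union>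
     {{(i, b), (i + 1, b)} | i b. 1 \<le> i \<and> i < n}"
  by (simp add: ladder_def edges_def)

lemma edges_char: "e \<in> edges (copies m (ladder n)) \<longleftrightarrow>
   (\<exists>j i. j<m \<and> 1\<le>i \<and> i\<le>n \<and> e = rung j i) \<or> (\<exists>j i b. j<m \<and> 1\<le>i \<and> i<n \<and> e = hor j i b)"
proof
  assume "e \<in> edges (copies m (ladder n))"
  then obtain j e' where j: "j < m" and e: "e = (\<lambda>x. (j,x)) ` e'" and e': "e' \<in> edges (ladder n)"
    unfolding copies_edges by blast
  from e' have "(\<exists>i. e' = {(i, False), (i, True)} \<and> 1 \<le> i \<and> i \<le> n) \<or> (\<exists>i b. e' = {(i, b), (i + 1, b)} \<and> 1 \<le> i \<and> i < n)"
    unfolding ladder_edges by blast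
  then show "(\<exists>j i. j<m \<and> 1\<le>i \<and> i\<le>n \<and> e = rung j i) \<or> (\<exists>j i b. j<m \<and> 1\<le>i \<and> i<n \<and> e = hor j i b)"
  proof
    assume "\<exists>i. e' = {(i, False), (i, True)} \<and> 1 \<le> i \<and> i \<le> n"
    then obtain i where "e' = {(i, False), (i, True)}" "1 \<le> i" "i \<le> n" by blast
    then show ?thesis using j e by (intro disjI1 exI[of _ j] exI[of _ i]) (simp add: rung_def)
  next
    assume "\<exists>i b. e' = {(i, b), (i + 1, b)} \<and> 1 \<le> i \<and> i < n"
    then obtain i b where "e' = {(i, b), (i + 1, b)}" "1 \<le> i" "i < n" by blast
    then show ?thesis using j e by (intro disjI2 exI[of _ j] exI[of _ i] exI[of _ b]) (simp add: hor_def)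
  qed
next
  assume "(\<exists>j i. j<m \<and> 1\<le>i \<and> i\<le>n \<and> e = rung j i) \<or> (\<exists>j i b. j<m \<and> 1\<le>i \<and> i<n \<and> e = hor j i b)"
  then show "e \<in> edges (copies m (ladder n))"
  proof
    assume "\<exists>j i. j<m \<and> 1\<le>i \<and> i\<le>n \<and> e = rung j i"
    then obtain j i where h: "j<m" "1\<le>i" "i\<le>n" "e = rung j i" by blast
    have "{(i,False),(i,True)} \<in> edges (ladder n)" using h unfolding ladder_edges by blast
    moreover have "e = (\<lambda>x. (j,x)) ` {(i,False),(i,True)}" using h by (simp add: rung_def)
    ultimately show ?thesis using h unfolding copies_edges by blast
  next
    assume "\<exists>j i b. j<m \<and> 1\<le>i \<and> i<n \<and> e = hor j i b"
    then obtain j i b where h: "j<m" "1\<le>i" "i<n" "e = hor j i b" by blast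
    have "{(i,b),(i+1,b)} \<in> edges (ladder n)" using h unfolding ladder_edges by blast
    moreover have "e = (\<lambda>x. (j,x)) ` {(i,b),(i+1,b)}" using h by (simp add: hor_def)
    ultimately show ?thesis using h unfolding copies_edges by blast
  qed
qed

lemma adj_iff: "{(j,i,b),(j',i',b')} \<in> edges (copies m (ladder n)) \<longleftrightarrow>
  j = j' \<and> j < m \<and> 1 \<le> i \<and> i \<le> n \<and> 1 \<le> i' \<and> i' \<le> n \<and>
  (i = i' \<and> b \<noteq> b' \<or> i' = Suc i \<and> b = b' \<or> i = Suc i' \<and> b = b')"
  (is "?L \<longleftrightarrow> ?R")
proof
  assume "?L"
  then consider (r) ja ia where "ja < m" "1 \<le> ia" "ia \<le> n" "{(j,i,b),(j',i',b')} = rung ja ia"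
    | (h) ja ia ba where "ja < m" "1 \<le> ia" "ia < n" "{(j,i,b),(j',i',b')} = hor ja ia ba"
    unfolding edges_char by blast
  then show ?R
  proof cases
    case r
    then have "(j,i,b) = (ja,ia,False) \<and> (j',i',b') = (ja,ia,True) \<or> (j,i,b) = (ja,ia,True) \<and> (j',i',b') = (ja,ia,False)"
      unfolding rung_def doubleton_eq_iff by blast
    then show ?thesis using r by auto
  next
    case h
    then have "(j,i,b) = (ja,ia,ba) \<and> (j',i',b') = (ja,Suc ia,ba) \<or> (j,i,b) = (ja,Suc ia,ba) \<and> (j',i',b') = (ja,ia,ba)"
      unfolding hor_def doubleton_eq_iff by blast
    then show ?thesis using h by auto
  qed
next
  assume h: ?R
  consider "i = i'" "b \<noteq> b'" | "i' = Suc i" "b = b'" | "i = Suc i'" "b = b'" using h by blast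
  then show ?L
  proof cases
    case 1
    then have "{(j,i,b),(j',i',b')} = rung j i" using h by (cases b; cases b'; simp add: rung_def insert_commute)
    then show ?thesis using h unfolding edges_char by blast
  next
    case 2 then have "{(j, i, b), (j', i', b')} = hor j i b" using h by (simp add: hor_def)
    moreover have "i < n" using h 2 by simp
    ultimately show ?thesis using h unfolding edges_char by blast
  next
    case 3 then have "{(j, i, b), (j', i', b')} = hor j i' b" using h by (simp add: hor_def insert_commute)
    moreover have "i' < n" using h 3 by simp
    ultimately show ?thesis using h unfolding edges_char by blast
  qed
qed



lemma shape0:
  fixes i0 i1 i2 i3 :: nat
  assumes "i1 = i0 \<and> b1 \<noteq> b0 \<or> b1 = b0 \<and> (i1 = Suc i0 \<or> i0 = Suc i1)"
    "i2 = i1 \<and> b2 \<noteq> b1 \<or> b2 = b1 \<and> (i2 = Suc i1 \<or> i1 = Suc i2)"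
    "i3 = i2 \<and> b3 \<noteq> b2 \<or> b3 = b2 \<and> (i3 = Suc i2 \<or> i2 = Suc i3)"
    "i0 = i3 \<and> b0 \<noteq> b3 \<or> b0 = b3 \<and> (i0 = Suc i3 \<or> i3 = Suc i0)"
    "distinct [(i0,b0),(i1,b1),(i2,b2),(i3,b3)]"
  shows "(i1=i0 \<and> b1 = (\<not>b0) \<and> b2 = (\<not>b0) \<and> i3 = i2 \<and> b3 = b0 \<and> (i2 = Suc i0 \<or> i0 = Suc i2))
   \<or> (b1 = b0 \<and> i2 = i1 \<and> b2 = (\<not>b0) \<and> i3 = i0 \<and> b3 = (\<not> b0) \<and> (i1 = Suc i0 \<or> i0 = Suc i1))"
  using assms by (cases b0; cases b1; cases b2; cases b3) auto



definition sqV :: "nat \<Rightarrow> nat \<Rightarrow> (nat \<times> nat \<times> bool) set" where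
  "sqV j i = {(j,i,False),(j,i,True),(j,Suc i,False),(j,Suc i,True)}"
definition sqE :: "nat \<Rightarrow> nat \<Rightarrow> (nat \<times> nat \<times> bool) set set" where
  "sqE j i = {rung j i, rung j (Suc i), hor j i False, hor j i True}"

lemma C4_verts: "verts (cycle_graph 4) = {0..<4}"
  by (simp add: cycle_graph_def verts_def)

lemma C4_edges: "edges (cycle_graph 4) = {{0,1},{1,2},{2,3},{3,0::nat}}"
proof -
  have "{{i, (i + 1) mod 4} | i. i < (4::nat)} = {{0,1},{1,2},{2,3},{3,0::nat}}"
  proof
    show "{{i, (i + 1) mod 4} | i. i < (4::nat)} \<subseteq> {{0,1},{1,2},{2,3},{3,0::nat}}"
    proof
      fix e assume "e \<in> {{i, (i + 1) mod 4} | i. i < (4::nat)}"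
      then obtain i where "i < (4::nat)" "e = {i, (i+1) mod 4}" by blast
      moreover have "i = 0 \<or> i = 1 \<or> i = 2 \<or> i = 3" using \<open>i < 4\<close> by auto
      ultimately show "e \<in> {{0,1},{1,2},{2,3},{3,0::nat}}" by auto
    qed
  next
    have "{0,1::nat} \<in> {{i, (i + 1) mod 4} | i. i < (4::nat)}" unfolding mem_Collect_eq by (rule exI[of _ 0]) simp
    moreover have "{1,2::nat} \<in> {{i, (i + 1) mod 4} | i. i < (4::nat)}" unfolding mem_Collect_eq by (rule exI[of _ 1]) (simp add: numeral_2_eq_2)
    moreover have "{2,3::nat} \<in> {{i, (i + 1) mod 4} | i. i < (4::nat)}" unfolding mem_Collect_eq by (rule exI[of _ 2]) simp
    moreover have "{3,0::nat} \<in> {{i, (i + 1) mod 4} | i. i < (4::nat)}" unfolding mem_Collect_eq by (rule exI[of _ 3]) simp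
    ultimately show "{{0,1},{1,2},{2,3},{3,0::nat}} \<subseteq> {{i, (i + 1) mod 4} | i. i < (4::nat)}"
      by blast
  qed
  then show ?thesis by (simp add: cycle_graph_def edges_def)
qed

lemma sq_iso: "graph_iso (sqV j i, sqE j i) (cycle_graph 4)"
proof -
  define f :: "nat \<times> nat \<times> bool \<Rightarrow> nat" where
    "f = (\<lambda>(j',i',b'). if i' = i then (if b' then 1 else 0) else (if b' then 2 else 3))"
  have "bij_betw f (sqV j i) {0..<4}"
    unfolding bij_betw_def inj_on_def sqV_def f_def by (auto simp: image_def)
  moreover have "\<forall>x\<in>sqV j i. \<forall>y\<in>sqV j i. {x, y} \<in> sqE j i \<longleftrightarrow> {f x, f y} \<in> {{0,1},{1,2},{2,3},{3,0::nat}}"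
    unfolding sqV_def sqE_def f_def rung_def hor_def by (simp add: doubleton_eq_iff)
  moreover have "verts (sqV j i, sqE j i) = sqV j i" "edges (sqV j i, sqE j i) = sqE j i"
    by (simp_all add: verts_def edges_def)
  ultimately show ?thesis unfolding graph_iso_def C4_verts C4_edges by metis
qed



definition cyc where "cyc x0 x1 x2 x3 = ({x0,x1,x2,x3}, {{x0,x1},{x1,x2},{x2,x3},{x3,x0}})"

lemma cyc_rot: "cyc x0 x1 x2 x3 = cyc x1 x2 x3 x0"
  unfolding cyc_def by auto

lemma cyc_sqA: "cyc (j,i,b) (j,i,\<not>b) (j,Suc i,\<not>b) (j,Suc i,b) = (sqV j i, sqE j i)"
  by (cases b) (auto simp: cyc_def sqV_def sqE_def rung_def hor_def)

lemma cyc_sqB: "cyc (j,Suc i,b) (j,Suc i,\<not>b) (j,i,\<not>b) (j,i,b) = (sqV j i, sqE j i)"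
  by (cases b) (auto simp: cyc_def sqV_def sqE_def rung_def hor_def)

lemma sq_sub:
  assumes "j < m" "1 \<le> i" "i < n"
  shows "(sqV j i, sqE j i) \<in> H_subgraphs (cycle_graph 4) (copies m (ladder n))"
proof -
  have "rung j i \<in> edges (copies m (ladder n))" unfolding edges_char using assms by (intro disjI1 exI[of _ j] exI[of _ i]) auto
  moreover have "rung j (Suc i) \<in> edges (copies m (ladder n))" unfolding edges_char using assms by (intro disjI1 exI[of _ j] exI[of _ "Suc i"]) auto
  moreover have "hor j i b \<in> edges (copies m (ladder n))" for b unfolding edges_char using assms by (intro disjI2 exI[of _ j] exI[of _ i] exI[of _ b]) auto
  ultimately have "sqE j i \<subseteq> edges (copies m (ladder n))" unfolding sqE_def by auto
  moreover have "sqV j i \<subseteq> verts (copies m (ladder n))" using assms by (auto simp: sqV_def verts_G)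
  moreover have "\<forall>e\<in>sqE j i. e \<subseteq> sqV j i" by (auto simp: sqE_def sqV_def rung_def hor_def)
  ultimately have "is_subgraph (sqV j i, sqE j i) (copies m (ladder n))"
    unfolding is_subgraph_def verts_def edges_def by simp
  then show ?thesis unfolding H_subgraphs_def using sq_iso by blast
qed



lemma adjD:
  assumes "{(j,i,b),(j',i',b')} \<in> edges (copies m (ladder n))"
  shows "j' = j \<and> j < m \<and> 1 \<le> i \<and> i \<le> n \<and> 1 \<le> i' \<and> i' \<le> n \<and>
    (i' = i \<and> b' \<noteq> b \<or> b' = b \<and> (i' = Suc i \<or> i = Suc i'))"
  using assms unfolding adj_iff by auto

lemma cyc_shape:
  assumes "{(j0,i0,b0),(j1,i1,b1)} \<in> edges (copies m (ladder n))"
    "{(j1,i1,b1),(j2,i2,b2)} \<in> edges (copies m (ladder n))"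
    "{(j2,i2,b2),(j3,i3,b3)} \<in> edges (copies m (ladder n))"
    "{(j3,i3,b3),(j0,i0,b0)} \<in> edges (copies m (ladder n))"
    "distinct [(j0,i0,b0),(j1,i1,b1),(j2,i2,b2),(j3,i3,b3)]"
  shows "\<exists>j i. j < m \<and> 1 \<le> i \<and> i < n \<and> cyc (j0,i0,b0) (j1,i1,b1) (j2,i2,b2) (j3,i3,b3) = (sqV j i, sqE j i)"
proof -
  note d1 = adjD[OF assms(1)] and d2 = adjD[OF assms(2)] and d3 = adjD[OF assms(3)] and d4 = adjD[OF assms(4)]
  have j: "j1 = j0" "j2 = j0" "j3 = j0" "j0 < m" using d1 d2 d3 by auto
  have dd: "distinct [(i0,b0),(i1,b1),(i2,b2),(i3,b3)]" using assms(5) j by auto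
  have "(i1=i0 \<and> b1 = (\<not>b0) \<and> b2 = (\<not>b0) \<and> i3 = i2 \<and> b3 = b0 \<and> (i2 = Suc i0 \<or> i0 = Suc i2))
   \<or> (b1 = b0 \<and> i2 = i1 \<and> b2 = (\<not>b0) \<and> i3 = i0 \<and> b3 = (\<not> b0) \<and> (i1 = Suc i0 \<or> i0 = Suc i1))"
    apply (rule shape0)
    using d1 d2 d3 d4 dd by auto
  then show ?thesis
  proof
    assume h: "i1=i0 \<and> b1 = (\<not>b0) \<and> b2 = (\<not>b0) \<and> i3 = i2 \<and> b3 = b0 \<and> (i2 = Suc i0 \<or> i0 = Suc i2)"
    show ?thesis
    proof (cases "i2 = Suc i0")
      case True
      then show ?thesis using h j cyc_sqA[of j0 i0 b0] d1 d2 by (intro exI[of _ j0] exI[of _ i0]) auto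
    next
      case False
      then have "i0 = Suc i2" using h by auto
      then show ?thesis using h j cyc_sqB[of j0 i2 b0] d1 d2 by (intro exI[of _ j0] exI[of _ i2]) auto
    qed
  next
    assume h: "b1 = b0 \<and> i2 = i1 \<and> b2 = (\<not>b0) \<and> i3 = i0 \<and> b3 = (\<not> b0) \<and> (i1 = Suc i0 \<or> i0 = Suc i1)"
    have r: "cyc (j0,i0,b0) (j1,i1,b1) (j2,i2,b2) (j3,i3,b3) = cyc (j1,i1,b1) (j2,i2,b2) (j3,i3,b3) (j0,i0,b0)"
      by (rule cyc_rot)
    show ?thesis
    proof (cases "i0 = Suc i1")
      case True
      then show ?thesis unfolding r using h j cyc_sqA[of j0 i1 b0] d1 d2 by (intro exI[of _ j0] exI[of _ i1]) auto
    next
      case False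
      then have "i1 = Suc i0" using h by auto
      then show ?thesis unfolding r using h j cyc_sqB[of j0 i0 b0] d1 d2 by (intro exI[of _ j0] exI[of _ i0]) auto
    qed
  qed
qed



lemma edge_doubleton: "e \<in> edges (copies m (ladder n)) \<Longrightarrow> \<exists>x y. e = {x, y}"
  unfolding edges_char rung_def hor_def by blast

lemma sub_sq:
  assumes "G' \<in> H_subgraphs (cycle_graph 4) (copies m (ladder n))"
  shows "\<exists>j i. j < m \<and> 1 \<le> i \<and> i < n \<and> G' = (sqV j i, sqE j i)"
proof -
  let ?G = "copies m (ladder n)"
  from assms have sub: "is_subgraph G' ?G" and iso: "graph_iso G' (cycle_graph 4)"
    unfolding H_subgraphs_def by auto
  from iso obtain f where bij: "bij_betw f (verts G') {0..<4}"
    and ec: "\<forall>x\<in>verts G'. \<forall>y\<in>verts G'. {x, y} \<in> edges G' \<longleftrightarrow> {f x, f y} \<in> {{0,1},{1,2},{2,3},{3,0::nat}}"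
    unfolding graph_iso_def C4_verts C4_edges by blast
  define a where "a k = inv_into (verts G') f k" for k
  have img: "f ` verts G' = {0..<4}" and inj: "inj_on f (verts G')" using bij by (auto simp: bij_betw_def)
  have aV: "a k \<in> verts G'" and fa: "f (a k) = k" if "k < 4" for k
  proof -
    have k: "k \<in> f ` verts G'" using img that by simp
    show "a k \<in> verts G'" unfolding a_def by (rule inv_into_into[OF k])
    show "f (a k) = k" unfolding a_def by (rule f_inv_into_f[OF k])
  qed
  have af: "a (f x) = x" if "x \<in> verts G'" for x
    unfolding a_def by (rule inv_into_f_f[OF inj that])
  have fx: "f x = 0 \<or> f x = 1 \<or> f x = 2 \<or> f x = 3" if "x \<in> verts G'" for x
  proof -
    have "f x \<in> {0..<4}" using that img by blast
    then have "f x < 4" by simp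
    then show ?thesis by arith
  qed
  have V': "verts G' = {a 0, a 1, a 2, a 3}"
  proof
    show "verts G' \<subseteq> {a 0, a 1, a 2, a 3}"
    proof
      fix x assume x: "x \<in> verts G'"
      then have "x = a (f x)" by (simp add: af)
      then show "x \<in> {a 0, a 1, a 2, a 3}" using fx[OF x] by (elim disjE) simp_all
    qed
    show "{a 0, a 1, a 2, a 3} \<subseteq> verts G'" using aV by simp
  qed
  have f0: "f (a 0) = 0" and f1: "f (a 1) = 1" and f2: "f (a 2) = 2" and f3: "f (a 3) = 3"
    by (simp_all add: fa)
  have ne: "a k \<noteq> a l" if "k < 4" "l < 4" "k \<noteq> l" for k l
    using fa[OF that(1)] fa[OF that(2)] that(3) by metis
  have dist: "distinct [a 0, a 1, a 2, a 3]"
    by (simp add: ne)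
  have A: "{a 0, a 1, a 2, a 3} \<subseteq> verts G'" using aV by simp
  have e01: "{a 0, a 1} \<in> edges G'"
    using ec[rule_format, of "a 0" "a 1"] A f0 f1 by simp
  have e12: "{a 1, a 2} \<in> edges G'"
    using ec[rule_format, of "a 1" "a 2"] A f1 f2 by simp
  have e23: "{a 2, a 3} \<in> edges G'"
    using ec[rule_format, of "a 2" "a 3"] A f2 f3 by simp
  have e30: "{a 3, a 0} \<in> edges G'"
    using ec[rule_format, of "a 3" "a 0"] A f3 f0 by simp
  have Esub: "edges G' \<subseteq> edges ?G" and Esv: "\<forall>e\<in>edges G'. e \<subseteq> verts G'"
    using sub unfolding is_subgraph_def by auto
  have E': "edges G' = {{a 0, a 1}, {a 1, a 2}, {a 2, a 3}, {a 3, a 0}}"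
  proof
    show "{{a 0, a 1}, {a 1, a 2}, {a 2, a 3}, {a 3, a 0}} \<subseteq> edges G'" using e01 e12 e23 e30 by auto
    show "edges G' \<subseteq> {{a 0, a 1}, {a 1, a 2}, {a 2, a 3}, {a 3, a 0}}"
    proof
      fix e assume e: "e \<in> edges G'"
      then obtain x y where xy: "e = {x, y}" using edge_doubleton Esub by blast
      then have x: "x \<in> verts G'" and y: "y \<in> verts G'" using e Esv by auto
      then have "{f x, f y} \<in> {{0,1},{1,2},{2,3},{3,0::nat}}" using ec[rule_format, OF x y] e xy by simp
      then have "a ` {f x, f y} \<in> (\<lambda>e. a ` e) ` {{0,1},{1,2},{2,3},{3,0::nat}}" by (rule imageI)
      then have "{a (f x), a (f y)} \<in> {{a 0, a 1}, {a 1, a 2}, {a 2, a 3}, {a 3, a 0}}"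
        by (simp only: image_insert image_empty)
      then show "e \<in> {{a 0, a 1}, {a 1, a 2}, {a 2, a 3}, {a 3, a 0}}" using af[OF x] af[OF y] xy by simp
    qed
  qed
  have "G' = (verts G', edges G')" by (simp add: verts_def edges_def)
  also have "\<dots> = cyc (a 0) (a 1) (a 2) (a 3)" unfolding cyc_def V' E' by (rule refl)
  finally have G'eq: "G' = cyc (a 0) (a 1) (a 2) (a 3)" .
  obtain j0 i0 b0 where a0: "a 0 = (j0,i0,b0)" by (metis prod.collapse)
  obtain j1 i1 b1 where a1: "a 1 = (j1,i1,b1)" by (metis prod.collapse)
  obtain j2 i2 b2 where a2: "a 2 = (j2,i2,b2)" by (metis prod.collapse)
  obtain j3 i3 b3 where a3: "a 3 = (j3,i3,b3)" by (metis prod.collapse)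
  show ?thesis
    unfolding G'eq a0 a1 a2 a3
  proof (rule cyc_shape)
    show "{(j0, i0, b0), (j1, i1, b1)} \<in> edges ?G" using e01 Esub unfolding a0 a1 by blast
    show "{(j1, i1, b1), (j2, i2, b2)} \<in> edges ?G" using e12 Esub unfolding a1 a2 by blast
    show "{(j2, i2, b2), (j3, i3, b3)} \<in> edges ?G" using e23 Esub unfolding a2 a3 by blast
    show "{(j3, i3, b3), (j0, i0, b0)} \<in> edges ?G" using e30 Esub unfolding a3 a0 by blast
    show "distinct [(j0, i0, b0), (j1, i1, b1), (j2, i2, b2), (j3, i3, b3)]" using dist unfolding a0 a1 a2 a3 .
  qed
qed



definition lam :: "nat \<Rightarrow> nat \<Rightarrow> (nat \<times> nat \<times> bool) + (nat \<times> nat \<times> bool) set \<Rightarrow> nat" where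
  "lam m n x = (case x of
     Inl (j,i,b) \<Rightarrow> (if b then 2*(m*n) - (m*(i-1)+j) else m*(i-1)+j+1)
   | Inr e \<Rightarrow> (let j = Min (fst ` e); I = (\<lambda>x. fst (snd x)) ` e; i = Min I; k = m*(i-1)+j in
       if card I = 1 then 3*(m*n) + 2*(m*(n-1)) - k
       else if (\<lambda>x. snd (snd x)) ` e = {False} then 2*(m*n) + 1 + k
       else 2*(m*n) + m*(n-1) + 1 + k))"

lemma lam_u: "lam m n (Inl (j,i,False)) = m*(i-1)+j+1" by (simp add: lam_def)
lemma lam_v: "lam m n (Inl (j,i,True)) = 2*(m*n) - (m*(i-1)+j)" by (simp add: lam_def)
lemma lam_rung: "lam m n (Inr (rung j i)) = 3*(m*n) + 2*(m*(n-1)) - (m*(i-1)+j)"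
  by (simp add: lam_def rung_def Let_def)
lemma lam_top: "lam m n (Inr (hor j i False)) = 2*(m*n) + 1 + (m*(i-1)+j)"
  by (simp add: lam_def hor_def Let_def)
lemma lam_bot: "lam m n (Inr (hor j i True)) = 2*(m*n) + m*(n-1) + 1 + (m*(i-1)+j)"
  by (simp add: lam_def hor_def Let_def)

lemma kdiv: "(j::nat) < m \<Longrightarrow> (m*q + j) div m = q" by simp
lemma kmod: "(j::nat) < m \<Longrightarrow> (m*q + j) mod m = j" by simp

lemma kbound: assumes "(j::nat) < m" "1 \<le> i" "i \<le> q" shows "m*(i-1)+j < m*q"
proof -
  have "m*(i-1) + j < m*(i-1) + m" using assms by simp
  also have "\<dots> = m * i" using assms by (cases i) auto
  also have "\<dots> \<le> m * q" using assms by simp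
  finally show ?thesis .
qed



definition Dm :: "nat \<Rightarrow> nat \<Rightarrow> ((nat \<times> nat \<times> bool) + (nat \<times> nat \<times> bool) set) set" where
  "Dm m n = Inl ` verts (copies m (ladder n)) \<union> Inr ` edges (copies m (ladder n))"

lemma D_char: "x \<in> Dm m n \<longleftrightarrow> (\<exists>j i b. j<m \<and> 1\<le>i \<and> i\<le>n \<and> x = Inl (j,i,b)) \<or>
   (\<exists>j i. j<m \<and> 1\<le>i \<and> i\<le>n \<and> x = Inr (rung j i)) \<or> (\<exists>j i b. j<m \<and> 1\<le>i \<and> i<n \<and> x = Inr (hor j i b))"
proof -
  have "x \<in> Dm m n \<longleftrightarrow> (\<exists>v. v \<in> verts (copies m (ladder n)) \<and> x = Inl v) \<or> (\<exists>e. e \<in> edges (copies m (ladder n)) \<and> x = Inr e)"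
    unfolding Dm_def by blast
  moreover have "(\<exists>v. v \<in> verts (copies m (ladder n)) \<and> x = Inl v) \<longleftrightarrow> (\<exists>j i b. j<m \<and> 1\<le>i \<and> i\<le>n \<and> x = Inl (j,i,b))"
    unfolding verts_G by auto
  moreover have "(\<exists>e. e \<in> edges (copies m (ladder n)) \<and> x = Inr e) \<longleftrightarrow> (\<exists>j i. j<m \<and> 1\<le>i \<and> i\<le>n \<and> x = Inr (rung j i)) \<or> (\<exists>j i b. j<m \<and> 1\<le>i \<and> i<n \<and> x = Inr (hor j i b))"
    unfolding edges_char by blast
  ultimately show ?thesis by blast
qed

definition dec :: "nat \<Rightarrow> nat \<Rightarrow> nat \<Rightarrow> (nat \<times> nat \<times> bool) + (nat \<times> nat \<times> bool) set" where
  "dec m n v = (if v \<le> m*n then (let k = v - 1 in Inl (k mod m, k div m + 1, False))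
    else if v \<le> 2*(m*n) then (let k = 2*(m*n) - v in Inl (k mod m, k div m + 1, True))
    else if v \<le> 2*(m*n) + m*(n-1) then (let k = v - (2*(m*n)+1) in Inr (hor (k mod m) (k div m + 1) False))
    else if v \<le> 2*(m*n) + 2*(m*(n-1)) then (let k = v - (2*(m*n)+m*(n-1)+1) in Inr (hor (k mod m) (k div m + 1) True))
    else (let k = 3*(m*n)+2*(m*(n-1)) - v in Inr (rung (k mod m) (k div m + 1))))"

lemma pos_ok:
  fixes m k q :: nat
  assumes "0 < m" "k < m*q"
  shows "k mod m < m \<and> 1 \<le> k div m + 1 \<and> k div m + 1 \<le> q \<and> m*((k div m + 1) - 1) + k mod m = k"
proof -
  have "k div m < q" using assms by (simp add: less_mult_imp_div_less mult.commute)
  then show ?thesis using assms by (simp add: mult_div_mod_eq)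
qed

lemma km: "(j::nat) < m \<Longrightarrow> 1 \<le> i \<Longrightarrow> (m*(i-1)+j) mod m = j \<and> (m*(i-1)+j) div m + 1 = i"
  by simp

lemma dec_lam:
  assumes "x \<in> Dm m n" "1 \<le> m" "2 \<le> n"
  shows "dec m n (lam m n x) = x"
proof -
  from assms(1) consider (u) j i b where "j<m" "1\<le>i" "i\<le>n" "x = Inl (j,i,b)"
    | (r) j i where "j<m" "1\<le>i" "i\<le>n" "x = Inr (rung j i)"
    | (h) j i b where "j<m" "1\<le>i" "i<n" "x = Inr (hor j i b)"
    unfolding D_char by blast
  then show ?thesis
  proof cases
    case u
    have kb: "m*(i-1)+j < m*n" using kbound u by blast
    note K = km[OF u(1) u(2)]
    show ?thesis
    proof (cases b)
      case True
      then show ?thesis using u kb K by (simp add: lam_v dec_def Let_def)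
    next
      case False
      then show ?thesis using u kb K by (simp add: lam_u dec_def Let_def)
    qed
  next
    case r
    have kb: "m*(i-1)+j < m*n" using kbound r by blast
    note K = km[OF r(1) r(2)]
    show ?thesis using r kb K by (simp add: lam_rung dec_def Let_def)
  next
    case h
    have kb: "m*(i-1)+j < m*(n-1)" using kbound h by simp
    note K = km[OF h(1) h(2)]
    show ?thesis
    proof (cases b)
      case True
      then show ?thesis using h kb K by (simp add: lam_bot dec_def Let_def)
    next
      case False
      then show ?thesis using h kb K by (simp add: lam_top dec_def Let_def)
    qed
  qed
qed



lemma Dm_u: "j<m \<Longrightarrow> 1\<le>i \<Longrightarrow> i\<le>n \<Longrightarrow> Inl (j,i,b) \<in> Dm m n" unfolding D_char by blast
lemma Dm_r: "j<m \<Longrightarrow> 1\<le>i \<Longrightarrow> i\<le>n \<Longrightarrow> Inr (rung j i) \<in> Dm m n" unfolding D_char by blast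
lemma Dm_h: "j<m \<Longrightarrow> 1\<le>i \<Longrightarrow> i<n \<Longrightarrow> Inr (hor j i b) \<in> Dm m n" unfolding D_char by blast

lemma lam_dec:
  assumes "1 \<le> v" "v \<le> 3*(m*n) + 2*(m*(n-1))" "1 \<le> m" "2 \<le> n"
  shows "dec m n v \<in> Dm m n \<and> lam m n (dec m n v) = v"
proof -
  have m0: "0 < m" using assms by simp
  consider "v \<le> m*n" | "m*n < v" "v \<le> 2*(m*n)" | "2*(m*n) < v" "v \<le> 2*(m*n) + m*(n-1)"
    | "2*(m*n) + m*(n-1) < v" "v \<le> 2*(m*n) + 2*(m*(n-1))" | "2*(m*n) + 2*(m*(n-1)) < v" by linarith
  then show ?thesis
  proof cases
    case 1
    define k where "k = v - 1"
    have kb: "k < m*n" using 1 assms unfolding k_def by linarith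
    note P = pos_ok[OF m0 kb]
    have d: "dec m n v = Inl (k mod m, k div m + 1, False)" using 1 unfolding dec_def k_def Let_def by simp
    show ?thesis unfolding d using P Dm_u[of "k mod m" m "k div m + 1" n] assms
      by (simp add: lam_u k_def)
  next
    case 2
    define k where "k = 2*(m*n) - v"
    have kb: "k < m*n" using 2 assms unfolding k_def by linarith
    note P = pos_ok[OF m0 kb]
    have d: "dec m n v = Inl (k mod m, k div m + 1, True)" using 2 unfolding dec_def k_def Let_def by simp
    show ?thesis unfolding d using P Dm_u[of "k mod m" m "k div m + 1" n] assms 2
      by (simp add: lam_v k_def)
  next
    case 3
    define k where "k = v - (2*(m*n)+1)"
    have kb: "k < m*(n-1)" using 3 assms unfolding k_def by linarith
    note P = pos_ok[OF m0 kb]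
    have d: "dec m n v = Inr (hor (k mod m) (k div m + 1) False)" using 3 unfolding dec_def k_def Let_def by simp
    have lt: "k div m + 1 < n" using P assms by linarith
    show ?thesis unfolding d using P Dm_h[of "k mod m" m "k div m + 1" n] assms 3 lt
      by (simp add: lam_top k_def)
  next
    case 4
    define k where "k = v - (2*(m*n)+m*(n-1)+1)"
    have kb: "k < m*(n-1)" using 4 assms unfolding k_def by linarith
    note P = pos_ok[OF m0 kb]
    have d: "dec m n v = Inr (hor (k mod m) (k div m + 1) True)" using 4 unfolding dec_def k_def Let_def by simp
    have lt: "k div m + 1 < n" using P assms by linarith
    show ?thesis unfolding d using P Dm_h[of "k mod m" m "k div m + 1" n] assms 4 lt
      by (simp add: lam_bot k_def)
  next
    case 5
    define k where "k = 3*(m*n)+2*(m*(n-1)) - v"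
    have kb: "k < m*n" using 5 assms unfolding k_def by linarith
    note P = pos_ok[OF m0 kb]
    have d: "dec m n v = Inr (rung (k mod m) (k div m + 1))" using 5 unfolding dec_def k_def Let_def by simp
    show ?thesis unfolding d using P Dm_r[of "k mod m" m "k div m + 1" n] assms 5
      by (simp add: lam_rung k_def)
  qed
qed

lemma lam_bij:
  assumes "1 \<le> m" "2 \<le> n"
  shows "bij_betw (lam m n) (Dm m n) {1..3*(m*n) + 2*(m*(n-1))}"
proof -
  have "inj_on (lam m n) (Dm m n)"
    by (rule inj_on_inverseI[where g = "dec m n"]) (rule dec_lam[OF _ assms])
  moreover have "lam m n ` Dm m n = {1..3*(m*n) + 2*(m*(n-1))}"
  proof
    show "{1..3*(m*n) + 2*(m*(n-1))} \<subseteq> lam m n ` Dm m n"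
    proof
      fix v assume "v \<in> {1..3*(m*n) + 2*(m*(n-1))}"
      then have "dec m n v \<in> Dm m n \<and> lam m n (dec m n v) = v" using lam_dec assms by simp
      then show "v \<in> lam m n ` Dm m n" by (metis imageI)
    qed
    show "lam m n ` Dm m n \<subseteq> {1..3*(m*n) + 2*(m*(n-1))}"
    proof
      fix v assume "v \<in> lam m n ` Dm m n"
      then obtain x where x: "x \<in> Dm m n" "v = lam m n x" by blast
      from x(1) consider (u) j i b where "j<m" "1\<le>i" "i\<le>n" "x = Inl (j,i,b)"
        | (r) j i where "j<m" "1\<le>i" "i\<le>n" "x = Inr (rung j i)"
        | (h) j i b where "j<m" "1\<le>i" "i<n" "x = Inr (hor j i b)"
        unfolding D_char by blast
      then show "v \<in> {1..3*(m*n) + 2*(m*(n-1))}"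
      proof cases
        case u
        have kb: "m*(i-1)+j < m*n" using kbound u by blast
        then show ?thesis using u x by (cases b; simp add: lam_u lam_v; linarith)
      next
        case r
        have kb: "m*(i-1)+j < m*n" using kbound r by blast
        then show ?thesis using r x by (simp add: lam_rung)
      next
        case h
        have kb: "m*(i-1)+j < m*(n-1)" using kbound h by simp
        then show ?thesis using h x by (cases b) (simp_all add: lam_top lam_bot)
      qed
    qed
  qed
  ultimately show ?thesis unfolding bij_betw_def by blast
qed



lemma warith: fixes K M N m :: nat assumes "K + m < M" "K < N"
  shows "((K + 1) + (2*M - K) + ((K + m) + 1) + (2*M - (K+m))) + ((3*M + 2*N - K) + (3*M+2*N - (K+m)) + (2*M + 1 + K) + (2*M + N + 1 + K)) = 14*M + 5*N + 4 - m"
  using assms by linarith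

lemma sq_weight:
  assumes "j<m" "1\<le>i" "i<n"
  shows "weight (lam m n) (sqV j i, sqE j i) = 14*(m*n) + 5*(m*(n-1)) + 4 - m"
proof -
  have ne: "rung j i \<noteq> rung j (Suc i)" "rung j i \<noteq> hor j i False" "rung j i \<noteq> hor j i True"
    "rung j (Suc i) \<noteq> hor j i False" "rung j (Suc i) \<noteq> hor j i True" "hor j i False \<noteq> hor j i True"
    by (simp_all add: rung_def hor_def doubleton_eq_iff)
  have sE: "(\<Sum>e\<in>sqE j i. lam m n (Inr e)) = lam m n (Inr (rung j i)) + lam m n (Inr (rung j (Suc i)))
     + lam m n (Inr (hor j i False)) + lam m n (Inr (hor j i True))"
    unfolding sqE_def using ne by simp
  have sV: "(\<Sum>v\<in>sqV j i. lam m n (Inl v)) = lam m n (Inl (j,i,False)) + lam m n (Inl (j,i,True))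
     + lam m n (Inl (j,Suc i,False)) + lam m n (Inl (j,Suc i,True))"
    unfolding sqV_def by simp
  define K where "K = m*(i-1)+j"
  define M where "M = m*n"
  define N where "N = m*(n-1)"
  have k1: "m*(Suc i - 1) + j = K + m" using assms unfolding K_def by (cases i) auto
  have kb: "K + m < M" using kbound[of j m "Suc i" n] assms k1 unfolding M_def by simp
  have kb2: "K < N" using kbound[of j m i "n-1"] assms unfolding K_def N_def by simp
  have "weight (lam m n) (sqV j i, sqE j i) = (\<Sum>v\<in>sqV j i. lam m n (Inl v)) + (\<Sum>e\<in>sqE j i. lam m n (Inr e))"
    by (simp add: weight_def verts_def edges_def)
  also have "\<dots> = ((K + 1) + (2*M - K) + ((K + m) + 1) + (2*M - (K+m))) + ((3*M + 2*N - K) + (3*M+2*N - (K+m)) + (2*M + 1 + K) + (2*M + N + 1 + K))"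
    unfolding sE sV lam_u lam_v lam_rung lam_top lam_bot k1 K_def[symmetric] M_def[symmetric] N_def[symmetric]
    by (simp only: add.assoc)
  also have "\<dots> = 14*M + 5*N + 4 - m" by (rule warith[OF kb kb2])
  finally show ?thesis unfolding M_def N_def .
qed



theorem theorem3:
  fixes m n :: nat
  assumes "m \<ge> 2" and "n \<ge> 2"
  shows "H_supermagic (cycle_graph 4) (copies m (ladder n))"
proof -
  let ?G = "copies m (ladder n)"
  let ?L = "3*(m*n) + 2*(m*(n-1))"
  have m1: "1 \<le> m" using assms by simp
  have simple: "simple_graph ?G"
    unfolding simple_graph_def
  proof
    show "finite (verts ?G)" unfolding verts_G by simp
    show "\<forall>e\<in>edges ?G. \<exists>x y. x \<in> verts ?G \<and> y \<in> verts ?G \<and> x \<noteq> y \<and> e = {x, y}"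
    proof
      fix e assume "e \<in> edges ?G"
      then consider (r) j i where "j<m" "1\<le>i" "i\<le>n" "e = rung j i"
        | (h) j i b where "j<m" "1\<le>i" "i<n" "e = hor j i b"
        unfolding edges_char by blast
      then show "\<exists>x y. x \<in> verts ?G \<and> y \<in> verts ?G \<and> x \<noteq> y \<and> e = {x, y}"
      proof cases
        case r then show ?thesis unfolding verts_G rung_def
          by (intro exI[of _ "(j,i,False)"] exI[of _ "(j,i,True)"]) simp
      next
        case h then show ?thesis unfolding verts_G hor_def
          by (intro exI[of _ "(j,i,b)"] exI[of _ "(j,Suc i,b)"]) simp
      qed
    qed
  qed
  have cover: "H_covering (cycle_graph 4) ?G"
    unfolding H_covering_def
  proof
    fix e assume "e \<in> edges ?G"
    then consider (r) j i where "j<m" "1\<le>i" "i\<le>n" "e = rung j i"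
      | (h) j i b where "j<m" "1\<le>i" "i<n" "e = hor j i b"
      unfolding edges_char by blast
    then show "\<exists>G'\<in>H_subgraphs (cycle_graph 4) ?G. e \<in> edges G'"
    proof cases
      case r
      show ?thesis
      proof (cases "i < n")
        case True
        have "e \<in> edges (sqV j i, sqE j i)" using r by (simp add: edges_def sqE_def)
        then show ?thesis using sq_sub[OF r(1) r(2) True] by blast
      next
        case False
        then have i: "i = Suc (n-1)" using r assms by simp
        have "e \<in> edges (sqV j (n-1), sqE j (n-1))" using r i by (simp add: edges_def sqE_def)
        moreover have "(sqV j (n-1), sqE j (n-1)) \<in> H_subgraphs (cycle_graph 4) ?G"
          using sq_sub[of j m "n-1" n] r assms by simp
        ultimately show ?thesis by blast
      qed
    next
      case h
      have "e \<in> edges (sqV j i, sqE j i)" using h by (cases b) (simp_all add: edges_def sqE_def)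
      then show ?thesis using sq_sub[OF h(1) h(2) h(3)] by blast
    qed
  qed
  have bij: "bij_betw (lam m n) (Inl ` verts ?G \<union> Inr ` edges ?G) {1..?L}"
    using lam_bij[OF m1 assms(2)] unfolding Dm_def .
  have cardV: "card (verts ?G) = 2*(m*n)" unfolding verts_G by (simp add: card_cartesian_product)
  have cardsum: "card (verts ?G) + card (edges ?G) = ?L"
  proof -
    have fin: "finite (Inl ` verts ?G \<union> Inr ` edges ?G)"
      using bij_betw_finite[OF bij] by simp
    have "card (Inl ` verts ?G \<union> Inr ` edges ?G) = ?L"
      using bij_betw_same_card[OF bij] by simp
    moreover have "card (Inl ` verts ?G \<union> Inr ` edges ?G) = card (Inl ` verts ?G :: ((nat \<times> nat \<times> bool) + (nat \<times> nat \<times> bool) set) set) + card (Inr ` edges ?G :: ((nat \<times> nat \<times> bool) + (nat \<times> nat \<times> bool) set) set)"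
      by (rule card_Un_disjoint) (use fin in auto)
    moreover have "card (Inl ` verts ?G :: ((nat \<times> nat \<times> bool) + (nat \<times> nat \<times> bool) set) set) = card (verts ?G)" by (rule card_image) (simp add: inj_on_def)
    moreover have "card (Inr ` edges ?G :: ((nat \<times> nat \<times> bool) + (nat \<times> nat \<times> bool) set) set) = card (edges ?G)" by (rule card_image) (simp add: inj_on_def)
    ultimately show ?thesis by simp
  qed
  have magic: "\<forall>G'\<in>H_subgraphs (cycle_graph 4) ?G. weight (lam m n) G' = 14*(m*n) + 5*(m*(n-1)) + 4 - m"
  proof
    fix G' assume "G' \<in> H_subgraphs (cycle_graph 4) ?G"
    then obtain j i where "j < m" "1 \<le> i" "i < n" "G' = (sqV j i, sqE j i)" using sub_sq by blast
    then show "weight (lam m n) G' = 14*(m*n) + 5*(m*(n-1)) + 4 - m" using sq_weight by blast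
  qed
  have super: "(\<lambda>v. lam m n (Inl v)) ` verts ?G = {1..card (verts ?G)}"
    unfolding cardV
  proof
    show "(\<lambda>v. lam m n (Inl v)) ` verts ?G \<subseteq> {1..2*(m*n)}"
    proof
      fix w assume "w \<in> (\<lambda>v. lam m n (Inl v)) ` verts ?G"
      then obtain j i b where v: "j<m" "1\<le>i" "i\<le>n" "w = lam m n (Inl (j,i,b))"
        unfolding verts_G by auto
      have kb: "m*(i-1)+j < m*n" using kbound v by blast
      then show "w \<in> {1..2*(m*n)}" using v by (cases b; simp add: lam_u lam_v; linarith)
    qed
    show "{1..2*(m*n)} \<subseteq> (\<lambda>v. lam m n (Inl v)) ` verts ?G"
    proof
      fix w assume w: "w \<in> {1..2*(m*n)}"
      then have d: "dec m n w \<in> Dm m n \<and> lam m n (dec m n w) = w" using lam_dec[OF _ _ m1 assms(2)] by simp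
      obtain p where p: "dec m n w = Inl p" using w by (cases "w \<le> m*n") (auto simp: dec_def Let_def)
      have "p \<in> verts ?G" using d unfolding p Dm_def by auto
      then show "w \<in> (\<lambda>v. lam m n (Inl v)) ` verts ?G" using d unfolding p by (metis imageI)
    qed
  qed
  show ?thesis
    unfolding H_supermagic_def H_supermagic_labeling_def H_magic_labeling_def
    using simple cover bij cardsum magic super by (intro conjI exI[of _ "lam m n"]) auto
qed

end
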